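(* Assume (HN.1), (HN.2), (HO), (HI). Then for $i\in\{0,1\}$, $$\lim_{n\to\infty}\frac1{\pi^n}\sum_{k\in\mathbb T_{n-1}}\delta_{2k+i}\varepsilon_{2k+i}=0\quad\text{a.s.}$$
   Context: Tree notation: individuals labelled by $\mathbb{T}=\mathbb{N}^*$, $k$ has daughters $2k$ (type 0) and $2k+1$ (type 1); $\mathbb{G}_n=\{2^n,\dots,2^{n+1}-1\}$, $\mathbb{T}_n=\bigcup_{\ell=0}^n\mathbb{G}_\ell$, $\mathbb{T}^0=\mathbb{T}\cap 2\mathbb{N}$, $\mathbb{T}^1=\mathbb{T}\cap(2\mathbb{N}+1)$, $\mathbb T_n^i=\mathbb T_n\cap\mathbb T^i$. BAR process: $\mathbb E[X_1^8]<\infty$ and for $k\ge1$, $X_{2k}=a+bX_k+\varepsilon_{2k}$, $X_{2k+1}=c+dX_k+\varepsilon_{2k+1}$, $(a,b,c,d)\in\mathbb R^4$, $0<\max(|b|,|d|)<1$; $\mathcal F_n=\sigma(X_k,k\in\mathbb T_n)$. (HN.1): for all $n\ge0$, $k\in\mathbb G_{n+1}$, $\varepsilon_k\in L^8$ and a.s. $\mathbb E[\varepsilon_k|\mathcal F_n]=0$, $\mathbb E[\varepsilon_k^2|\mathcal F_n]=\sigma^2$, $\mathbb E[\varepsilon_k^4|\mathcal F_n]=\tau^4$, $\mathbb E[\varepsilon_k^8|\mathcal F_n]=\kappa^8$ with $\sigma^2,\tau^4,\kappa^8\in(0,\infty)$; and for $k\in\mathbb G_n$, $\mathbb E[\varepsilon_{2k}\varepsilon_{2k+1}|\mathcal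 F_n]=\rho=\rho'\sigma^2$, $\mathbb E[\varepsilon_{2k}^2\varepsilon_{2k+1}^2|\mathcal F_n]=\nu^2\tau^4$, $\mathbb E[\varepsilon_{2k}^4\varepsilon_{2k+1}^4|\mathcal F_n]=\lambda^4\kappa^8$ with $|\rho'|,\nu^2,\lambda^4\in[0,1)$. (HN.2): for each $n\ge0$ the vectors $(\varepsilon_{2k},\varepsilon_{2k+1})$, $k\in\mathbb G_n$, are conditionally independent given $\mathcal F_n$. Observation process: $\delta_1=1$, $\delta_{2k}=\delta_k\zeta_k^0$, $\delta_{2k+1}=\delta_k\zeta_k^1$, with $\boldsymbol\zeta_k=(\zeta_k^0,\zeta_k^1)\in\{0,1\}^2$ independent, common law $p^{(0)}$ for even $k$ and $p^{(1)}$ for odd $k$; $p_{i0}=p^{(i)}(1,0)+p^{(i)}(1,1)$, $p_{i1}=p^{(i)}(0,1)+p^{(i)}(1,1)$, $\boldsymbol P=(p_{ij})$. (HO): all $p_{ij}>0$ and the Perron eigenvalue $\pi$ of $\boldsymbol P$ satisfies $\pi>1$. (HI): $(\delta_k)$, $(\boldsymbol\zeta_k)$ are independent of $(X_k)$, $(\varepsilon_k)$. *)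

theory Defs
  imports "HOL-Probability.Probability"
begin

text \<open>Generations of the binary tree: G n = {2^n, ..., 2^(n+1)-1},
  T n = union of G 0 .. G n = {1, ..., 2^(n+1)-1}.\<close>
definition Gen :: "nat \<Rightarrow> nat set" where
  "Gen n = {2^n..<2^(n+1)}"

definition Tn :: "nat \<Rightarrow> nat set" where
  "Tn n = {1..<2^(n+1)}"

definition gen_sigma :: "'a measure \<Rightarrow> (nat \<Rightarrow> 'a \<Rightarrow> real) \<Rightarrow> nat set \<Rightarrow> 'a measure" where
  "gen_sigma M X I = sigma (space M) {X k -` A \<inter> space M | k A. k \<in> I \<and> A \<in> sets borel}"

definition cond_indep_given ::
  "'a measure \<Rightarrow> 'a measure \<Rightarrow> 'i set \<Rightarrow> ('i \<Rightarrow> 'a \<Rightarrow> 'b) \<Rightarrow> 'b measure \<Rightarrow> bool" where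
  "cond_indep_given M F I Y N \<longleftrightarrow>
     (\<forall>J. J \<subseteq> I \<longrightarrow> finite J \<longrightarrow> (\<forall>B. (\<forall>j\<in>J. B j \<in> sets N) \<longrightarrow>
        (AE \<omega> in M. real_cond_exp M F (indicator (\<Inter>j\<in>J. Y j -` B j \<inter> space M)) \<omega>
            = (\<Prod>j\<in>J. real_cond_exp M F (indicator (Y j -` B j \<inter> space M)) \<omega>))))"

definition eigen2 :: "(nat \<Rightarrow> nat \<Rightarrow> real) \<Rightarrow> real \<Rightarrow> bool" where
  "eigen2 P l \<longleftrightarrow> (\<exists>v0 v1. (v0, v1) \<noteq> (0, 0) \<and>
      P 0 0 * v0 + P 0 1 * v1 = l * v0 \<and> P 1 0 * v0 + P 1 1 * v1 = l * v1)"

definition perron2 :: "(nat \<Rightarrow> nat \<Rightarrow> real) \<Rightarrow> real" where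
  "perron2 P = Max {l. eigen2 P l}"

text \<open>p_{i0} = P(zeta^0 = 1), p_{i1} = P(zeta^1 = 1) under the law p^{(i)} on {0,1}^2
  (encoded as bool x bool).\<close>
definition pmat :: "(nat \<Rightarrow> (bool \<times> bool) pmf) \<Rightarrow> nat \<Rightarrow> nat \<Rightarrow> real" where
  "pmat p i j = (if j = 0 then pmf (p i) (True, False) + pmf (p i) (True, True)
                 else pmf (p i) (False, True) + pmf (p i) (True, True))"

end

theory Submission
  imports Defs "HOL-Computational_Algebra.Polynomial"
begin



lemma gen_sigma_space[simp]: "space (gen_sigma M X I) = space M"
  unfolding gen_sigma_def by (simp add: space_measure_of_conv)

lemma gen_sigma_sets: "sets (gen_sigma M X I) = sigma_sets (space M) {X k -` A \<inter> space M | k A. k \<in> I \<and> A \<in> sets borel}"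
  unfolding gen_sigma_def by (rule sets_measure_of) auto

lemma gen_sigma_meas:
  assumes "k \<in> I" shows "X k \<in> borel_measurable (gen_sigma M X I)"
  by (rule measurableI) (use assms in \<open>auto simp: gen_sigma_sets intro!: sigma_sets.Basic\<close>)

lemma gen_sigma_subalg:
  assumes "\<And>k. k \<in> I \<Longrightarrow> X k \<in> borel_measurable M"
  shows "subalgebra M (gen_sigma M X I)"
  unfolding subalgebra_def
proof
  show "sets (gen_sigma M X I) \<subseteq> sets M" unfolding gen_sigma_sets
    by (rule sets.sigma_sets_subset) (use assms in auto)
qed simp

lemma gen_sigma_sfs:
  assumes "prob_space M" "\<And>k. k \<in> I \<Longrightarrow> X k \<in> borel_measurable M"
  shows "sigma_finite_subalgebra M (gen_sigma M X I)"
proof -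
  interpret prob_space M by fact
  have "finite_measure_subalgebra M (gen_sigma M X I)"
    by unfold_locales (rule gen_sigma_subalg[OF assms(2)])
  then show ?thesis by (rule finite_measure_subalgebra_is_sigma_finite)
qed




lemma integral_agree:
  fixes U V :: "'a \<Rightarrow> real" and Y :: "'a \<Rightarrow> 'b" and f :: "'b \<Rightarrow> real"
  assumes Y[measurable]: "Y \<in> measurable M N"
    and [measurable]: "U \<in> borel_measurable M" "V \<in> borel_measurable M"
    and iU: "integrable M U" and iV: "integrable M V"
    and nU: "AE x in M. 0 \<le> U x" and nV: "AE x in M. 0 \<le> V x"
    and eq: "\<And>B. B \<in> sets N \<Longrightarrow> (\<integral>x. indicator B (Y x) * U x \<partial>M) = (\<integral>x. indicator B (Y x) * V x \<partial>M)"
    and f[measurable]: "f \<in> borel_measurable N"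
  shows "(\<integral>x. f (Y x) * U x \<partial>M) = (\<integral>x. f (Y x) * V x \<partial>M)"
proof -
  have D: "distr (density M (\<lambda>x. ennreal (U x))) N Y = distr (density M (\<lambda>x. ennreal (V x))) N Y"
  proof (rule measure_eqI)
    fix B assume B[measurable]: "B \<in> sets (distr (density M (\<lambda>x. ennreal (U x))) N Y)"
    then have BN: "B \<in> sets N" by simp
    have *: "\<And>W :: 'a \<Rightarrow> real. W \<in> borel_measurable M \<Longrightarrow> integrable M W \<Longrightarrow> AE x in M. 0 \<le> W x \<Longrightarrow>
       emeasure (distr (density M (\<lambda>x. ennreal (W x))) N Y) B = ennreal (\<integral>x. indicator B (Y x) * W x \<partial>M)"
    proof -
      fix W :: "'a \<Rightarrow> real" assume [measurable]: "W \<in> borel_measurable M" and iW: "integrable M W" and nW: "AE x in M. 0 \<le> W x"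
      have "emeasure (distr (density M (\<lambda>x. ennreal (W x))) N Y) B
          = emeasure (density M (\<lambda>x. ennreal (W x))) (Y -` B \<inter> space M)"
        using BN by (simp add: emeasure_distr)
      also have "\<dots> = (\<integral>\<^sup>+ x. ennreal (W x) * indicator (Y -` B \<inter> space M) x \<partial>M)"
        using BN by (subst emeasure_density) auto
      also have "\<dots> = (\<integral>\<^sup>+ x. ennreal (indicator B (Y x) * W x) \<partial>M)"
        by (intro nn_integral_cong) (auto simp: indicator_def)
      also have "\<dots> = ennreal (\<integral>x. indicator B (Y x) * W x \<partial>M)"
      proof (rule nn_integral_eq_integral)
        show "integrable M (\<lambda>x. indicator B (Y x) * W x)"
          by (rule Bochner_Integration.integrable_bound[OF iW]) (auto simp: indicator_def)
        show "AE x in M. 0 \<le> indicator B (Y x) * W x" using nW by eventually_elim auto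
      qed
      finally show "emeasure (distr (density M (\<lambda>x. ennreal (W x))) N Y) B = ennreal (\<integral>x. indicator B (Y x) * W x \<partial>M)" .
    qed
    show "emeasure (distr (density M (\<lambda>x. ennreal (U x))) N Y) B = emeasure (distr (density M (\<lambda>x. ennreal (V x))) N Y) B"
      using *[of U] *[of V] iU iV nU nV eq[OF BN] by simp
  qed simp
  have "(\<integral>x. f (Y x) * U x \<partial>M) = integral\<^sup>L (distr (density M (\<lambda>x. ennreal (U x))) N Y) f"
    using nU by (simp add: integral_distr integral_density mult.commute)
  also have "\<dots> = integral\<^sup>L (distr (density M (\<lambda>x. ennreal (V x))) N Y) f" by (simp add: D)
  also have "\<dots> = (\<integral>x. f (Y x) * V x \<partial>M)"
    using nV by (simp add: integral_distr integral_density mult.commute)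
  finally show ?thesis .
qed




lemma (in prob_space) indep_set_mono':
  "indep_set A B \<Longrightarrow> A' \<subseteq> A \<Longrightarrow> B' \<subseteq> B \<Longrightarrow> indep_set A' B'"
  unfolding indep_sets2_eq by blast

lemma (in prob_space) indep_vimage_integral:
  fixes f g :: "_ \<Rightarrow> real"
  assumes ind: "indep_set (sets (vimage_algebra (space M) Phi N1)) (sets (vimage_algebra (space M) Psi N2))"
    and m1: "f \<in> borel_measurable (vimage_algebra (space M) Phi N1)"
    and m2: "g \<in> borel_measurable (vimage_algebra (space M) Psi N2)"
    and ih: "integrable M f" and ik: "integrable M g"
  shows "(\<integral>x. f x * g x \<partial>M) = (\<integral>x. f x \<partial>M) * (\<integral>x. g x \<partial>M)"
    "integrable M (\<lambda>x. f x * g x)"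
proof -
  have s1: "sigma_sets (space M) {f -` A \<inter> space M |A. A \<in> sets borel} \<subseteq> sets (vimage_algebra (space M) Phi N1)"
    using sets.sigma_sets_subset[of "{f -` A \<inter> space M |A. A \<in> sets borel}" "vimage_algebra (space M) Phi N1"]
      measurable_sets[OF m1] by auto
  have s2: "sigma_sets (space M) {g -` A \<inter> space M |A. A \<in> sets borel} \<subseteq> sets (vimage_algebra (space M) Psi N2)"
    using sets.sigma_sets_subset[of "{g -` A \<inter> space M |A. A \<in> sets borel}" "vimage_algebra (space M) Psi N2"]
      measurable_sets[OF m2] by auto
  have iv: "indep_var borel f borel g"
    unfolding indep_var_eq using ih ik s1 s2 indep_set_mono'[OF ind] by auto
  show "(\<integral>x. f x * g x \<partial>M) = (\<integral>x. f x \<partial>M) * (\<integral>x. g x \<partial>M)"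
    by (rule indep_var_lebesgue_integral[OF iv ih ik])
  show "integrable M (\<lambda>x. f x * g x)"
    by (rule indep_var_integrable[OF iv ih ik])
qed

lemma meas_vimage_comp:
  assumes "Phi \<in> X \<rightarrow> space N" "h \<in> measurable N K"
  shows "(\<lambda>x. h (Phi x)) \<in> measurable (vimage_algebra X Phi N) K"
  by (rule measurable_comp[OF measurable_vimage_algebra1 assms(2), unfolded comp_def]) (use assms in auto)




lemma eigen2_det:
  assumes "eigen2 P l"
  shows "(P 0 0 - l) * (P 1 1 - l) - P 0 1 * P 1 0 = 0"
proof -
  obtain v0 v1 where v: "(v0, v1) \<noteq> (0, 0)" "P 0 0 * v0 + P 0 1 * v1 = l * v0" "P 1 0 * v0 + P 1 1 * v1 = l * v1"
    using assms unfolding eigen2_def by blast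
  let ?d = "(P 0 0 - l) * (P 1 1 - l) - P 0 1 * P 1 0"
  have "?d * v0 = (P 1 1 - l) * (P 0 0 * v0 + P 0 1 * v1 - l * v0) - P 0 1 * (P 1 0 * v0 + P 1 1 * v1 - l * v1)"
    by (simp add: algebra_simps)
  then have a: "?d * v0 = 0" using v by simp
  have "?d * v1 = (P 0 0 - l) * (P 1 0 * v0 + P 1 1 * v1 - l * v1) - P 1 0 * (P 0 0 * v0 + P 0 1 * v1 - l * v0)"
    by (simp add: algebra_simps)
  then have b: "?d * v1 = 0" using v by simp
  show ?thesis using a b v(1) by auto
qed

lemma perron_vec:
  fixes P :: "nat \<Rightarrow> nat \<Rightarrow> real"
  assumes pos: "\<And>i j. i \<le> 1 \<Longrightarrow> j \<le> 1 \<Longrightarrow> P i j > 0"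
  shows "\<exists>v0 v1. v0 > 0 \<and> v1 > 0 \<and> P 0 0 * v0 + P 0 1 * v1 = perron2 P * v0
          \<and> P 1 0 * v0 + P 1 1 * v1 = perron2 P * v1"
proof -
  have p00: "P 0 0 > 0" and p01: "P 0 1 > 0" and p10: "P 1 0 > 0" and p11: "P 1 1 > 0" using pos by auto
  define q where "q = [:P 0 0 * P 1 1 - P 0 1 * P 1 0, -(P 0 0 + P 1 1), 1:]"
  have "q \<noteq> 0" unfolding q_def by simp
  then have fq: "finite {x. poly q x = 0}" by (rule poly_roots_finite)
  have "{l. eigen2 P l} \<subseteq> {x. poly q x = 0}"
  proof
    fix l assume "l \<in> {l. eigen2 P l}"
    then have "(P 0 0 - l) * (P 1 1 - l) - P 0 1 * P 1 0 = 0" using eigen2_det by blast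
    then show "l \<in> {x. poly q x = 0}" unfolding q_def by (simp add: algebra_simps power2_eq_square)
  qed
  then have fin: "finite {l. eigen2 P l}" using fq finite_subset by blast
  define D where "D = (P 0 0 - P 1 1)^2 + 4 * P 0 1 * P 1 0"
  define s where "s = sqrt D"
  have Dpos: "D > (P 0 0 - P 1 1)^2" unfolding D_def using p01 p10 by simp
  then have D0: "D \<ge> 0" by (smt (verit) zero_le_power2)
  have s2: "s^2 = D" unfolding s_def using D0 by simp
  have s_gt: "s > \<bar>P 0 0 - P 1 1\<bar>"
    unfolding s_def using Dpos by (metis real_sqrt_abs real_sqrt_less_iff)
  define lp where "lp = (P 0 0 + P 1 1 + s) / 2"
  have lp_eig: "eigen2 P lp"
    unfolding eigen2_def
  proof (intro exI conjI)
    show "(P 0 1, lp - P 0 0) \<noteq> (0, 0)" using p01 by simp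
    show "P 0 0 * P 0 1 + P 0 1 * (lp - P 0 0) = lp * P 0 1" by (simp add: algebra_simps)
    have "lp * lp - (P 0 0 + P 1 1) * lp + (P 0 0 * P 1 1 - P 0 1 * P 1 0) = 0"
      unfolding lp_def using s2 unfolding D_def by (simp add: field_simps power2_eq_square)
    then show "P 1 0 * P 0 1 + P 1 1 * (lp - P 0 0) = lp * (lp - P 0 0)" by (simp add: algebra_simps)
  qed
  have lp_gt: "lp > P 0 0" "lp > P 1 1" unfolding lp_def using s_gt by auto
  have pi_ge: "perron2 P \<ge> lp" unfolding perron2_def using fin lp_eig by (simp add: Max_ge)
  have "perron2 P \<in> {l. eigen2 P l}" unfolding perron2_def using fin lp_eig by (intro Max_in) auto
  then obtain v0 v1 where v: "(v0, v1) \<noteq> (0, 0)" "P 0 0 * v0 + P 0 1 * v1 = perron2 P * v0"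
      "P 1 0 * v0 + P 1 1 * v1 = perron2 P * v1"
    unfolding eigen2_def by blast
  let ?pi = "perron2 P"
  have e1: "P 0 1 * v1 = (?pi - P 0 0) * v0" using v(2) by (simp add: algebra_simps)
  have g0: "?pi - P 0 0 > 0" using pi_ge lp_gt by simp
  have "v0 \<noteq> 0"
  proof
    assume "v0 = 0" then have "v1 = 0" using e1 p01 by simp
    then show False using v(1) \<open>v0 = 0\<close> by simp
  qed
  have v1eq: "v1 = (?pi - P 0 0) * v0 / P 0 1" using e1 p01 by (simp add: field_simps)
  show ?thesis
  proof (cases "v0 > 0")
    case True
    have "v1 > 0" using v1eq True g0 p01 by simp
    then show ?thesis using True v by blast
  next
    case False
    then have n: "v0 < 0" using \<open>v0 \<noteq> 0\<close> by simp
    have "v1 < 0" using v1eq n g0 p01 by (simp add: divide_neg_pos mult_pos_neg)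
    show ?thesis
      by (rule exI[of _ "-v0"], rule exI[of _ "-v1"]) (use n \<open>v1 < 0\<close> v in \<open>auto simp: algebra_simps\<close>)
  qed
qed




lemma gen_exists: "k \<ge> 1 \<Longrightarrow> \<exists>n. k \<in> Gen n"
proof (induction k rule: less_induct)
  case (less k)
  show ?case
  proof (cases "k = 1")
    case True then show ?thesis by (auto simp: Gen_def intro!: exI[of _ 0])
  next
    case False
    then have "k div 2 \<ge> 1" "k div 2 < k" using less.prems by auto
    then obtain n where "k div 2 \<in> Gen n" using less.IH by blast
    then have "k \<in> Gen (Suc n)" unfolding Gen_def by auto
    then show ?thesis by blast
  qed
qed

lemma gen_exists2: "k \<ge> 2 \<Longrightarrow> \<exists>n. k \<in> Gen (Suc n)"
proof -
  assume k: "k \<ge> 2"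
  then obtain n where n: "k \<in> Gen n" using gen_exists[of k] by auto
  have "n \<noteq> 0"
  proof
    assume "n = 0" then show False using n k by (simp add: Gen_def)
  qed
  then show ?thesis using n by (cases n) auto
qed

lemma sum_double: fixes a b :: nat shows "(\<Sum>k\<in>{a..<b}. f (2*k) + f (2*k+1)) = (\<Sum>j\<in>{2*a..<2*b}. (f j :: real))"
proof (induction b)
  case 0 then show ?case by simp
next
  case (Suc b)
  show ?case
  proof (cases "a \<le> b")
    case True
    have e: "{2*a..<2*Suc b} = insert (2*b+1) (insert (2*b) {2*a..<2*b})" using True by auto
    show ?thesis using Suc True by (simp add: e)
  next
    case False
    then have "{a..<Suc b} = {}" "{2*a..<2*Suc b} = {}" by auto
    then show ?thesis by simp
  qed
qed

lemma sum_Gen_Suc: fixes f :: "nat \<Rightarrow> real" shows "(\<Sum>j\<in>Gen (Suc n). (f j :: real)) = (\<Sum>k\<in>Gen n. f (2*k) + f (2*k+1))"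
  unfolding Gen_def using sum_double[of f "2^n" "2^(n+1)"] by simp

lemma Tn_Suc: "Tn (Suc n) = Tn n \<union> Gen (Suc n)" "Tn n \<inter> Gen (Suc n) = {}"
  unfolding Tn_def Gen_def by auto

lemma sum_Tn_Gen: fixes f :: "nat \<Rightarrow> real" shows "(\<Sum>k\<in>Tn n. (f k :: real)) = (\<Sum>m\<le>n. \<Sum>k\<in>Gen m. f k)"
proof (induction n)
  case 0 then show ?case by (simp add: Tn_def Gen_def)
next
  case (Suc n)
  have "(\<Sum>k\<in>Tn (Suc n). f k) = (\<Sum>k\<in>Tn n. f k) + (\<Sum>k\<in>Gen (Suc n). f k)"
    unfolding Tn_Suc(1) by (rule sum.union_disjoint) (auto simp: Tn_def Gen_def)
  then show ?case using Suc by simp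
qed




lemma dstep:
  fixes delta :: "nat \<Rightarrow> 'a \<Rightarrow> real" and zeta :: "nat \<Rightarrow> 'a \<Rightarrow> bool \<times> bool" and k :: nat
  assumes delta_even: "\<And>k \<omega>. k \<ge> 1 \<Longrightarrow> delta (2*k) \<omega> = delta k \<omega> * of_bool (fst (zeta k \<omega>))"
    and delta_odd: "\<And>k \<omega>. k \<ge> 1 \<Longrightarrow> delta (2*k+1) \<omega> = delta k \<omega> * of_bool (snd (zeta k \<omega>))"
    and k: "k \<ge> 2"
  shows "delta k \<omega> = delta (k div 2) \<omega> * of_bool (if even k then fst (zeta (k div 2) \<omega>) else snd (zeta (k div 2) \<omega>))"
proof -
  have h: "k div 2 \<ge> 1" using k by auto
  show ?thesis
  proof (cases "even k")
    case True
    then have "k = 2 * (k div 2)" by simp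
    then show ?thesis using delta_even[OF h, of \<omega>] True by simp
  next
    case False
    then have "k = 2 * (k div 2) + 1" by simp
    then show ?thesis using delta_odd[OF h, of \<omega>] False by simp
  qed
qed




locale obs = prob_space M for M :: "'a measure" +
  fixes delta :: "nat \<Rightarrow> 'a \<Rightarrow> real" and zeta :: "nat \<Rightarrow> 'a \<Rightarrow> bool \<times> bool"
    and p :: "nat \<Rightarrow> (bool \<times> bool) pmf"
  assumes delta1: "\<And>\<omega>. delta 1 \<omega> = 1"
    and delta_even: "\<And>k \<omega>. k \<ge> 1 \<Longrightarrow> delta (2*k) \<omega> = delta k \<omega> * of_bool (fst (zeta k \<omega>))"
    and delta_odd: "\<And>k \<omega>. k \<ge> 1 \<Longrightarrow> delta (2*k+1) \<omega> = delta k \<omega> * of_bool (snd (zeta k \<omega>))"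
    and zeta_meas: "\<And>k. k \<ge> 1 \<Longrightarrow> zeta k \<in> measurable M (count_space UNIV)"
    and zeta_law: "\<And>k. k \<ge> 1 \<Longrightarrow> distr M (count_space UNIV) (zeta k) = measure_pmf (p (k mod 2))"
    and zeta_indep: "indep_vars (\<lambda>_. count_space UNIV) zeta {1..}"
begin

lemma dstep': "k \<ge> 2 \<Longrightarrow> delta k \<omega> = delta (k div 2) \<omega> * of_bool (if even k then fst (zeta (k div 2) \<omega>) else snd (zeta (k div 2) \<omega>))"
  by (rule dstep[OF delta_even delta_odd])

lemma delta01: "k \<ge> 1 \<Longrightarrow> delta k \<omega> = 0 \<or> delta k \<omega> = 1"
proof (induction k rule: less_induct)
  case (less k)
  show ?case
  proof (cases "k = 1")
    case True then show ?thesis using delta1 by simp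
  next
    case False
    then have "k \<ge> 2" "k div 2 < k" "k div 2 \<ge> 1" using less.prems by auto
    then show ?thesis using less.IH[of "k div 2"] dstep'[of k \<omega>] by auto
  qed
qed

lemma delta_meas: "k \<ge> 1 \<Longrightarrow> delta k \<in> borel_measurable M"
proof (induction k rule: less_induct)
  case (less k)
  show ?case
  proof (cases "k = 1")
    case True
    then have "delta k = (\<lambda>_. 1)" using delta1 by auto
    then show ?thesis by simp
  next
    case False
    then have k: "k \<ge> 2" "k div 2 < k" "k div 2 \<ge> 1" using less.prems by auto
    have eq: "delta k = (\<lambda>\<omega>. delta (k div 2) \<omega> * of_bool (if even k then fst (zeta (k div 2) \<omega>) else snd (zeta (k div 2) \<omega>)))"
      using dstep'[OF k(1)] by auto
    have m: "(\<lambda>\<omega>. of_bool (if even k then fst (zeta (k div 2) \<omega>) else snd (zeta (k div 2) \<omega>)) :: real) \<in> borel_measurable M"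
      using measurable_comp[OF zeta_meas[OF k(3)], of "\<lambda>z. of_bool (if even k then fst z else snd z) :: real" borel]
      by (simp add: comp_def)
    show ?thesis unfolding eq using less.IH[OF k(2) k(3)] m by measurable
  qed
qed

definition VV :: "nat \<Rightarrow> 'a measure" where
  "VV K = vimage_algebra (space M) (\<lambda>\<omega>. restrict (\<lambda>m. zeta m \<omega>) {1..<K}) (PiM {1..<K} (\<lambda>_. count_space UNIV))"

lemma zeta_VV: "m \<in> {1..<K} \<Longrightarrow> (\<lambda>\<omega>. g (zeta m \<omega>) :: real) \<in> borel_measurable (VV K)"
proof -
  assume m: "m \<in> {1..<K}"
  have "(\<lambda>\<omega>. (\<lambda>x. g (x m)) (restrict (\<lambda>m. zeta m \<omega>) {1..<K})) \<in> borel_measurable (VV K)"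
    unfolding VV_def
  proof (rule meas_vimage_comp)
    show "(\<lambda>\<omega>. restrict (\<lambda>m. zeta m \<omega>) {1..<K}) \<in> space M \<rightarrow> space (Pi\<^sub>M {1..<K} (\<lambda>_. count_space UNIV))"
      by (auto simp: space_PiM)
    show "(\<lambda>x. g (x m)) \<in> borel_measurable (Pi\<^sub>M {1..<K} (\<lambda>_. count_space UNIV))"
      using measurable_comp[OF measurable_component_singleton[OF m, of "\<lambda>_. count_space UNIV"], of g borel]
      by (simp add: comp_def)
  qed
  then show ?thesis using m by simp
qed

lemma delta_VV: "1 \<le> k \<Longrightarrow> k \<le> K \<Longrightarrow> delta k \<in> borel_measurable (VV K)"
proof (induction k rule: less_induct)
  case (less k)
  show ?case
  proof (cases "k = 1")
    case True
    then have "delta k = (\<lambda>_. 1)" using delta1 by auto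
    then show ?thesis by simp
  next
    case False
    then have k: "k \<ge> 2" "k div 2 < k" "k div 2 \<ge> 1" using less.prems by auto
    have eq: "delta k = (\<lambda>\<omega>. delta (k div 2) \<omega> * of_bool (if even k then fst (zeta (k div 2) \<omega>) else snd (zeta (k div 2) \<omega>)))"
      using dstep'[OF k(1)] by auto
    have m: "(\<lambda>\<omega>. of_bool (if even k then fst (zeta (k div 2) \<omega>) else snd (zeta (k div 2) \<omega>)) :: real) \<in> borel_measurable (VV K)"
      using zeta_VV[of "k div 2" K "\<lambda>z. of_bool (if even k then fst z else snd z)"] k less.prems by simp
    have "delta (k div 2) \<in> borel_measurable (VV K)" using less.IH[OF k(2) k(3)] less.prems k by simp
    then show ?thesis unfolding eq using m by measurable
  qed
qed

lemma e_rec: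
  assumes k: "k \<ge> 1" and c: "c \<le> (1::nat)"
  shows "(\<integral>\<omega>. delta (2*k+c) \<omega> \<partial>M) = (\<integral>\<omega>. delta k \<omega> \<partial>M) * pmat p (k mod 2) c"
proof -
  define g0 :: "bool \<times> bool \<Rightarrow> real" where "g0 = (\<lambda>z. of_bool (if c = 0 then fst z else snd z))"
  have split: "\<And>\<omega>. delta (2*k+c) \<omega> = delta k \<omega> * g0 (zeta k \<omega>)"
    using c delta_even[OF k] delta_odd[OF k] unfolding g0_def by (cases c) auto
  have iv: "indep_var (PiM {1..<k} (\<lambda>_. count_space UNIV)) (\<lambda>\<omega>. restrict (\<lambda>m. zeta m \<omega>) {1..<k})
       (PiM {k} (\<lambda>_. count_space UNIV)) (\<lambda>\<omega>. restrict (\<lambda>m. zeta m \<omega>) {k})"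
    by (rule indep_var_restrict[OF zeta_indep]) (use k in auto)
  have ind: "indep_set (sets (VV k)) (sets (vimage_algebra (space M) (\<lambda>\<omega>. restrict (\<lambda>m. zeta m \<omega>) {k}) (PiM {k} (\<lambda>_. count_space UNIV))))"
    using iv unfolding indep_var_eq VV_def sets_vimage_algebra by simp
  have m1: "delta k \<in> borel_measurable (VV k)" using delta_VV[of k k] k by simp
  have m2: "(\<lambda>\<omega>. g0 (zeta k \<omega>)) \<in> borel_measurable (vimage_algebra (space M) (\<lambda>\<omega>. restrict (\<lambda>m. zeta m \<omega>) {k}) (PiM {k} (\<lambda>_. count_space UNIV)))"
  proof -
    have "(\<lambda>\<omega>. (\<lambda>x. g0 (x k)) (restrict (\<lambda>m. zeta m \<omega>) {k})) \<in> borel_measurable (vimage_algebra (space M) (\<lambda>\<omega>. restrict (\<lambda>m. zeta m \<omega>) {k}) (PiM {k} (\<lambda>_. count_space UNIV)))"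
    proof (rule meas_vimage_comp)
      show "(\<lambda>\<omega>. restrict (\<lambda>m. zeta m \<omega>) {k}) \<in> space M \<rightarrow> space (Pi\<^sub>M {k} (\<lambda>_. count_space UNIV))"
        by (auto simp: space_PiM)
      show "(\<lambda>x. g0 (x k)) \<in> borel_measurable (Pi\<^sub>M {k} (\<lambda>_. count_space UNIV))"
        using measurable_comp[OF measurable_component_singleton[of k "{k}" "\<lambda>_. count_space UNIV"], of g0 borel]
        by (simp add: comp_def)
    qed
    then show ?thesis by simp
  qed
  have dm: "delta k \<in> borel_measurable M" by (rule delta_meas[OF k])
  have zm: "(\<lambda>\<omega>. g0 (zeta k \<omega>)) \<in> borel_measurable M"
    using measurable_comp[OF zeta_meas[OF k], of g0 borel] by (simp add: comp_def)
  have i1: "integrable M (delta k)"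
  proof (rule integrable_const_bound[where B=1])
    have "\<And>\<omega>. \<bar>delta k \<omega>\<bar> \<le> 1" using delta01[OF k] by (metis abs_0 abs_one order_refl zero_le_one)
    then show "AE x in M. norm (delta k x) \<le> 1" by simp
  qed (rule dm)
  have i2: "integrable M (\<lambda>\<omega>. g0 (zeta k \<omega>))"
    by (rule integrable_const_bound[where B=1]) (use zm in \<open>auto simp: g0_def\<close>)
  have "(\<integral>\<omega>. delta (2*k+c) \<omega> \<partial>M) = (\<integral>\<omega>. delta k \<omega> * g0 (zeta k \<omega>) \<partial>M)" by (simp add: split)
  also have "\<dots> = (\<integral>\<omega>. delta k \<omega> \<partial>M) * (\<integral>\<omega>. g0 (zeta k \<omega>) \<partial>M)"
    by (rule indep_vimage_integral(1)[OF ind[unfolded VV_def] m1[unfolded VV_def] m2 i1 i2])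
  also have "(\<integral>\<omega>. g0 (zeta k \<omega>) \<partial>M) = integral\<^sup>L (distr M (count_space UNIV) (zeta k)) g0"
    by (rule integral_distr[symmetric, OF zeta_meas[OF k]]) simp
  also have "\<dots> = (\<integral>z. g0 z \<partial>measure_pmf (p (k mod 2)))" by (simp add: zeta_law[OF k])
  also have "\<dots> = (\<Sum>a\<in>UNIV. g0 a * pmf (p (k mod 2)) a)"
    by (rule integral_measure_pmf_real) auto
  also have "\<dots> = pmat p (k mod 2) c"
    using c unfolding g0_def pmat_def UNIV_Times_UNIV[symmetric] UNIV_bool by (cases c) auto
  finally show ?thesis .
qed

end




lemma geom_bound:
  fixes q :: real assumes q: "q > 1"
  shows "(\<Sum>m\<le>n. q^m) \<le> q^(n+1) / (q - 1)"
proof (induction n)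
  case 0 then show ?case using q by (simp add: field_simps)
next
  case (Suc n)
  have "(\<Sum>m\<le>Suc n. q^m) \<le> q^(n+1)/(q-1) + q^(n+1)" using Suc by simp
  also have "\<dots> = q^(n+2)/(q-1)" using q by (simp add: field_simps)
  finally show ?case by simp
qed

context obs
begin

lemma e_nonneg: "k \<ge> 1 \<Longrightarrow> 0 \<le> (\<integral>\<omega>. delta k \<omega> \<partial>M)"
proof -
  assume k: "k \<ge> 1"
  have "\<And>\<omega>. 0 \<le> delta k \<omega>" using delta01[OF k] by (metis order_refl zero_le_one)
  then show ?thesis by (simp add: integral_nonneg)
qed

lemma e_bound:
  assumes pos: "\<And>i j. i \<le> 1 \<Longrightarrow> j \<le> 1 \<Longrightarrow> pmat p i j > 0"
    and pi1: "perron2 (pmat p) > 1"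
  shows "\<exists>C. \<forall>n. (\<Sum>k\<in>Tn n. \<integral>\<omega>. delta k \<omega> \<partial>M) \<le> C * perron2 (pmat p) ^ n"
proof -
  let ?pi = "perron2 (pmat p)"
  let ?P = "pmat p"
  define e where "e k = (\<integral>\<omega>. delta k \<omega> \<partial>M)" for k
  obtain v0 v1 where v: "v0 > 0" "v1 > 0" "?P 0 0 * v0 + ?P 0 1 * v1 = ?pi * v0"
    "?P 1 0 * v0 + ?P 1 1 * v1 = ?pi * v1"
    using perron_vec[of "pmat p", OF pos] by metis
  define v where "v t = (if t = 0 then v0 else v1)" for t :: nat
  have vpos: "\<And>t. v t > 0" using v unfolding v_def by auto
  have veig: "\<And>t. t \<le> 1 \<Longrightarrow> ?P t 0 * v 0 + ?P t 1 * v 1 = ?pi * v t"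
  proof -
    fix t :: nat assume "t \<le> 1"
    then have "t = 0 \<or> t = 1" by auto
    then show "?P t 0 * v 0 + ?P t 1 * v 1 = ?pi * v t"
    proof
      assume "t = 0" then show ?thesis using v(3) unfolding v_def by simp
    next
      assume "t = 1" then show ?thesis using v(4) unfolding v_def by simp
    qed
  qed
  have genpos: "\<And>k n. k \<in> Gen n \<Longrightarrow> k \<ge> 1"
  proof -
    fix k n assume "k \<in> Gen n"
    then have "2^n \<le> k" unfolding Gen_def by simp
    moreover have "(1::nat) \<le> 2^n" by simp
    ultimately show "k \<ge> 1" by linarith
  qed
  have W: "(\<Sum>k\<in>Gen n. e k * v (k mod 2)) = ?pi ^ n * v1" for n
  proof (induction n)
    case 0
    have g0: "Gen 0 = {1}" by (auto simp: Gen_def)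
    have "e 1 = 1" unfolding e_def delta1 by (simp add: prob_space)
    then show ?case by (simp add: g0 v_def)
  next
    case (Suc n)
    have "(\<Sum>k\<in>Gen (Suc n). e k * v (k mod 2)) = (\<Sum>k\<in>Gen n. e (2*k) * v 0 + e (2*k+1) * v 1)"
      by (subst sum_Gen_Suc) simp
    also have "\<dots> = (\<Sum>k\<in>Gen n. e k * (?P (k mod 2) 0 * v 0 + ?P (k mod 2) 1 * v 1))"
    proof (rule sum.cong[OF refl])
      fix k assume "k \<in> Gen n" then have k: "k \<ge> 1" by (rule genpos)
      have "e (2*k) = e k * ?P (k mod 2) 0" using e_rec[OF k, of 0] unfolding e_def by simp
      moreover have "e (2*k+1) = e k * ?P (k mod 2) 1" using e_rec[OF k, of 1] unfolding e_def by simp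
      ultimately show "e (2*k) * v 0 + e (2*k+1) * v 1 = e k * (?P (k mod 2) 0 * v 0 + ?P (k mod 2) 1 * v 1)"
        by (simp add: algebra_simps)
    qed
    also have "\<dots> = (\<Sum>k\<in>Gen n. ?pi * (e k * v (k mod 2)))"
    proof (rule sum.cong[OF refl])
      fix k :: nat
      have "k mod 2 \<le> 1" by simp
      from veig[OF this] show "e k * (?P (k mod 2) 0 * v 0 + ?P (k mod 2) 1 * v 1) = ?pi * (e k * v (k mod 2))"
        by simp
    qed
    also have "\<dots> = ?pi * (\<Sum>k\<in>Gen n. e k * v (k mod 2))" by (rule sum_distrib_left[symmetric])
    also have "\<dots> = ?pi ^ Suc n * v1" using Suc by simp
    finally show ?case .
  qed
  define vm where "vm = min v0 v1"
  have vm: "vm > 0" "\<And>t. vm \<le> v t" using v unfolding vm_def v_def by auto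
  have G: "(\<Sum>k\<in>Gen n. e k) \<le> ?pi ^ n * v1 / vm" for n
  proof -
    have "(\<Sum>k\<in>Gen n. e k) \<le> (\<Sum>k\<in>Gen n. e k * v (k mod 2) / vm)"
    proof (rule sum_mono)
      fix k assume "k \<in> Gen n"
      then have "e k \<ge> 0" unfolding e_def by (intro e_nonneg genpos)
      then have "e k * vm \<le> e k * v (k mod 2)" using vm by (intro mult_left_mono) auto
      then show "e k \<le> e k * v (k mod 2) / vm" using vm by (simp add: field_simps)
    qed
    also have "\<dots> = (\<Sum>k\<in>Gen n. e k * v (k mod 2)) / vm" by (rule sum_divide_distrib[symmetric])
    also have "\<dots> = ?pi ^ n * v1 / vm" using W[of n] by simp
    finally show ?thesis .
  qed
  show ?thesis
  proof (intro exI allI)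
    fix n
    have "(\<Sum>k\<in>Tn n. e k) = (\<Sum>m\<le>n. \<Sum>k\<in>Gen m. e k)" by (rule sum_Tn_Gen)
    also have "\<dots> \<le> (\<Sum>m\<le>n. ?pi ^ m * (v1 / vm))" by (rule sum_mono) (use G in simp)
    also have "\<dots> = (v1 / vm) * (\<Sum>m\<le>n. ?pi ^ m)" by (simp add: sum_distrib_left mult.commute)
    also have "\<dots> \<le> (v1 / vm) * (?pi^(n+1) / (?pi - 1))"
      using geom_bound[OF pi1, of n] v vm by (intro mult_left_mono) auto
    also have "\<dots> = (v1 / vm * ?pi / (?pi - 1)) * ?pi ^ n" by (simp add: field_simps)
    finally show "(\<Sum>k\<in>Tn n. \<integral>\<omega>. delta k \<omega> \<partial>M) \<le> (v1 / vm * ?pi / (?pi - 1)) * ?pi ^ n"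
      unfolding e_def .
  qed
qed

end



locale noise = prob_space M for M :: "'a measure" +
  fixes X eps :: "nat \<Rightarrow> 'a \<Rightarrow> real" and a b c d sigma2 :: real
  assumes X1_meas: "X 1 \<in> borel_measurable M"
    and eps_meas: "\<And>k. k \<ge> 2 \<Longrightarrow> eps k \<in> borel_measurable M"
    and X_even: "\<And>k \<omega>. k \<ge> 1 \<Longrightarrow> X (2*k) \<omega> = a + b * X k \<omega> + eps (2*k) \<omega>"
    and X_odd: "\<And>k \<omega>. k \<ge> 1 \<Longrightarrow> X (2*k+1) \<omega> = c + d * X k \<omega> + eps (2*k+1) \<omega>"
    and eps_L8: "\<And>n k. k \<in> Gen (Suc n) \<Longrightarrow> integrable M (\<lambda>\<omega>. eps k \<omega> ^ 8)"
    and ce1: "\<And>n k. k \<in> Gen (Suc n) \<Longrightarrow>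
       AE \<omega> in M. real_cond_exp M (gen_sigma M X (Tn n)) (eps k) \<omega> = 0"
    and ce2: "\<And>n k. k \<in> Gen (Suc n) \<Longrightarrow>
       AE \<omega> in M. real_cond_exp M (gen_sigma M X (Tn n)) (\<lambda>\<omega>. eps k \<omega> ^ 2) \<omega> = sigma2"
    and HN2: "\<And>n. cond_indep_given M (gen_sigma M X (Tn n)) (Gen n)
       (\<lambda>k \<omega>. (eps (2*k) \<omega>, eps (2*k+1) \<omega>)) (borel :: (real \<times> real) measure)"
begin

lemma eps_X: "k \<ge> 2 \<Longrightarrow> eps k \<omega> = X k \<omega> - (if even k then a + b * X (k div 2) \<omega> else c + d * X (k div 2) \<omega>)"
proof -
  assume k: "k \<ge> 2"
  have h: "k div 2 \<ge> 1" using k by auto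
  show ?thesis
  proof (cases "even k")
    case True
    then have "k = 2 * (k div 2)" by simp
    then show ?thesis using X_even[OF h, of \<omega>] True by simp
  next
    case False
    then have "k = 2 * (k div 2) + 1" by simp
    then show ?thesis using X_odd[OF h, of \<omega>] False by simp
  qed
qed

lemma Xm: "k \<ge> 1 \<Longrightarrow> X k \<in> borel_measurable M"
proof (induction k rule: less_induct)
  case (less k)
  show ?case
  proof (cases "k = 1")
    case True then show ?thesis using X1_meas by simp
  next
    case False
    then have k: "k \<ge> 2" "k div 2 < k" "k div 2 \<ge> 1" using less.prems by auto
    have eq: "X k = (\<lambda>\<omega>. eps k \<omega> + (if even k then a + b * X (k div 2) \<omega> else c + d * X (k div 2) \<omega>))"
      using eps_X[OF k(1)] by auto
    have "X (k div 2) \<in> borel_measurable M" by (rule less.IH[OF k(2) k(3)])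
    then show ?thesis unfolding eq using eps_meas[OF k(1)] by measurable
  qed
qed

lemma Tn_pos: "k \<in> Tn n \<Longrightarrow> k \<ge> 1" unfolding Tn_def by auto

lemma sfs: "sigma_finite_subalgebra M (gen_sigma M X (Tn n))"
  by (rule gen_sigma_sfs) (auto intro: prob_space_axioms Xm Tn_pos)

lemma eps_F: assumes "2 \<le> j" "j < 2^(m+1)" shows "eps j \<in> borel_measurable (gen_sigma M X (Tn m))"
proof -
  have eq: "eps j = (\<lambda>\<omega>. X j \<omega> - (if even j then a + b * X (j div 2) \<omega> else c + d * X (j div 2) \<omega>))"
    using eps_X[OF assms(1)] by auto
  have "j \<in> Tn m" "j div 2 \<in> Tn m" using assms unfolding Tn_def by auto
  then have "X j \<in> borel_measurable (gen_sigma M X (Tn m))" "X (j div 2) \<in> borel_measurable (gen_sigma M X (Tn m))"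
    by (auto intro: gen_sigma_meas)
  then show ?thesis unfolding eq by measurable
qed

lemma eps8: "k \<ge> 2 \<Longrightarrow> integrable M (\<lambda>\<omega>. eps k \<omega> ^ 8)"
  using gen_exists2 eps_L8 by blast

lemma pow_bound: "\<bar>x::real\<bar> \<le> 1 + x^8" "x^2 \<le> 1 + x^8"
proof -
  have x8: "x^8 = (x^2)^4" unfolding power_mult[symmetric] by simp
  have x80: "0 \<le> x^8" unfolding x8 by (rule zero_le_power[OF zero_le_power2])
  show x2: "x^2 \<le> 1 + x^8"
  proof (cases "x^2 \<le> 1")
    case True
    then show ?thesis using x80 by linarith
  next
    case False
    then have "1 \<le> x^2" by simp
    then have "x^2 \<le> (x^2)^4" by (rule self_le_power) simp
    then show ?thesis using x8 x80 by linarith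
  qed
  show "\<bar>x::real\<bar> \<le> 1 + x^8"
  proof (cases "\<bar>x\<bar> \<le> 1")
    case True then show ?thesis using x80 by linarith
  next
    case False
    then have "\<bar>x\<bar> * 1 \<le> \<bar>x\<bar> * \<bar>x\<bar>" by (intro mult_left_mono) auto
    then have a: "\<bar>x\<bar> \<le> x^2" by (simp add: power2_eq_square abs_mult_self_eq)
    then have "1 \<le> x^2" using False by linarith
    then have "x^2 \<le> (x^2)^4" by (rule self_le_power) simp
    then show ?thesis using a x8 by linarith
  qed
qed

lemma b: "\<bar>x * y\<bar> \<le> \<bar>x^2 + y^2\<bar>" for x y :: real
proof -
  have "0 \<le> (\<bar>x\<bar> - \<bar>y\<bar>)^2" by simp
  then have "2 * (\<bar>x\<bar> * \<bar>y\<bar>) \<le> x^2 + y^2" by (simp add: power2_eq_square algebra_simps)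
  moreover have "0 \<le> \<bar>x\<bar> * \<bar>y\<bar>" by simp
  moreover have "0 \<le> x^2" "0 \<le> y^2" by simp_all
  ultimately show ?thesis unfolding abs_mult by linarith
qed

lemma eps_int: "k \<ge> 2 \<Longrightarrow> integrable M (eps k)"
proof -
  assume k: "k \<ge> 2"
  have i: "integrable M (\<lambda>\<omega>. 1 + eps k \<omega> ^ 8)" using eps8[OF k] by simp
  show ?thesis
    by (rule Bochner_Integration.integrable_bound[OF i]) (use eps_meas[OF k] pow_bound in auto)
qed

lemma eps2_int: "k \<ge> 2 \<Longrightarrow> integrable M (\<lambda>\<omega>. eps k \<omega> ^ 2)"
proof -
  assume k: "k \<ge> 2"
  have i: "integrable M (\<lambda>\<omega>. 1 + eps k \<omega> ^ 8)" using eps8[OF k] by simp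
  show ?thesis
    by (rule Bochner_Integration.integrable_bound[OF i]) (use eps_meas[OF k] pow_bound in auto)
qed

lemma prod_int: "j \<ge> 2 \<Longrightarrow> l \<ge> 2 \<Longrightarrow> integrable M (\<lambda>\<omega>. eps j \<omega> * eps l \<omega>)"
proof -
  assume j: "j \<ge> 2" and l: "l \<ge> 2"
  have i: "integrable M (\<lambda>\<omega>. eps j \<omega> ^ 2 + eps l \<omega> ^ 2)" using eps2_int[OF j] eps2_int[OF l] by simp
  show ?thesis
    by (rule Bochner_Integration.integrable_bound[OF i]) (use eps_meas[OF j] eps_meas[OF l] b in auto)
qed

end



context noise
begin

lemma Gen_Suc_ge2: "l \<in> Gen (Suc m) \<Longrightarrow> l \<ge> 2"
proof -
  assume "l \<in> Gen (Suc m)"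
  then have "2^(Suc m) \<le> l" unfolding Gen_def by simp
  moreover have "(2::nat) \<le> 2^(Suc m)" by simp
  ultimately show ?thesis by linarith
qed

lemma orth_cross:
  assumes j: "2 \<le> j" "j < 2^(m+1)" and l: "l \<in> Gen (Suc m)"
  shows "(\<integral>\<omega>. eps j \<omega> * eps l \<omega> \<partial>M) = 0"
proof -
  interpret S: sigma_finite_subalgebra M "gen_sigma M X (Tn m)" by (rule sfs)
  have l2: "l \<ge> 2" by (rule Gen_Suc_ge2[OF l])
  have "(\<integral>\<omega>. eps j \<omega> * eps l \<omega> \<partial>M) = (\<integral>\<omega>. eps j \<omega> * real_cond_exp M (gen_sigma M X (Tn m)) (eps l) \<omega> \<partial>M)"
    by (rule S.real_cond_exp_intg(2)[symmetric]) (use prod_int[OF j(1) l2] eps_F[OF j] eps_meas[OF l2] in auto)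
  also have "\<dots> = 0"
    by (rule integral_eq_zero_AE) (use ce1[OF l] in auto)
  finally show ?thesis .
qed

lemma fst_borel: "(fst :: real \<times> real \<Rightarrow> real) \<in> borel_measurable borel"
  unfolding borel_prod[symmetric] by (rule measurable_fst)
lemma snd_borel: "(snd :: real \<times> real \<Rightarrow> real) \<in> borel_measurable borel"
  unfolding borel_prod[symmetric] by (rule measurable_snd)
lemma pair_borel: "(f :: _ \<Rightarrow> real) \<in> borel_measurable N \<Longrightarrow> (g :: _ \<Rightarrow> real) \<in> borel_measurable N \<Longrightarrow> (\<lambda>x. (f x, g x)) \<in> borel_measurable N"
  unfolding borel_prod[symmetric] by (rule measurable_Pair)

lemma bdd_int: "f \<in> borel_measurable M \<Longrightarrow> (\<And>x. \<bar>f x\<bar> \<le> B) \<Longrightarrow> integrable M (f :: _ \<Rightarrow> real)"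
  by (rule integrable_const_bound[where B=B]) auto

lemma orth_same:
  assumes k1: "k1 \<in> Gen m" and k2: "k2 \<in> Gen m" and ne: "k1 \<noteq> k2" and c1: "c1 \<le> (1::nat)" and c2: "c2 \<le> (1::nat)"
  shows "(\<integral>\<omega>. eps (2*k1+c1) \<omega> * eps (2*k2+c2) \<omega> \<partial>M) = 0"
proof -
  let ?F = "gen_sigma M X (Tn m)"
  interpret S: sigma_finite_subalgebra M ?F by (rule sfs)
  define Y where "Y k \<omega> = (eps (2*k) \<omega>, eps (2*k+1) \<omega>)" for k \<omega>
  define pr where "pr c y = (if c = (0::nat) then fst y else snd (y :: real \<times> real))" for c y
  have epsY: "\<And>k c \<omega>. c \<le> 1 \<Longrightarrow> eps (2*k+c) \<omega> = pr c (Y k \<omega>)"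
    unfolding Y_def pr_def by (auto simp: le_Suc_eq)
  have prm: "\<And>c. pr c \<in> borel_measurable borel"
  proof -
    fix c
    have e: "pr c = (if c = 0 then fst else snd)" by (auto simp: pr_def fun_eq_iff)
    show "pr c \<in> borel_measurable borel"
      unfolding e by (cases "c = 0") (simp_all add: fst_borel snd_borel)
  qed
  define j where "j = 2*k1+c1"
  define l where "l = 2*k2+c2"
  have jG: "j \<in> Gen (Suc m)" and lG: "l \<in> Gen (Suc m)" using k1 k2 c1 c2 unfolding j_def l_def Gen_def by auto
  have j2: "j \<ge> 2" and l2: "l \<ge> 2" using Gen_Suc_ge2 jG lG by auto
  have genpos: "\<And>k. k \<in> Gen m \<Longrightarrow> 2*k \<ge> 2"
  proof -
    fix k assume "k \<in> Gen m"
    then have "2^m \<le> k" unfolding Gen_def by simp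
    moreover have "(1::nat) \<le> 2^m" by simp
    ultimately show "2*k \<ge> 2" by linarith
  qed
  have Ym: "\<And>k. k \<in> Gen m \<Longrightarrow> Y k \<in> borel_measurable M"
  proof -
    fix k assume k: "k \<in> Gen m"
    have "eps (2*k) \<in> borel_measurable M" "eps (2*k+1) \<in> borel_measurable M"
      using eps_meas genpos[OF k] by auto
    then show "Y k \<in> borel_measurable M" unfolding Y_def by (rule pair_borel)
  qed
  note Y1m = Ym[OF k1] and Y2m = Ym[OF k2]
  have epsj: "eps j = (\<lambda>\<omega>. pr c1 (Y k1 \<omega>))" unfolding j_def using epsY c1 by auto
  have epsl: "eps l = (\<lambda>\<omega>. pr c2 (Y k2 \<omega>))" unfolding l_def using epsY c2 by auto
  have ejm: "eps j \<in> borel_measurable M" and elm: "eps l \<in> borel_measurable M" using eps_meas j2 l2 by auto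
  define A where "A k B = Y k -` B \<inter> space M" for k B
  have Am: "\<And>k (B :: (real \<times> real) set). k \<in> Gen m \<Longrightarrow> B \<in> sets borel \<Longrightarrow> A k B \<in> sets M"
    unfolding A_def using Ym measurable_sets by blast
  have indm: "\<And>k (B :: (real \<times> real) set). k \<in> Gen m \<Longrightarrow> B \<in> sets borel \<Longrightarrow> indicator (A k B) \<in> borel_measurable M"
    using Am by (simp add: borel_measurable_indicator)
  have indi: "\<And>k (B :: (real \<times> real) set). k \<in> Gen m \<Longrightarrow> B \<in> sets borel \<Longrightarrow> integrable M (indicator (A k B) :: _ \<Rightarrow> real)"
    by (rule bdd_int[where B=1]) (auto simp: indm indicator_def)
  define Z where "Z k B = real_cond_exp M ?F (indicator (A k B))" for k B
  have ZmF: "\<And>k (B :: (real \<times> real) set). Z k B \<in> borel_measurable ?F" unfolding Z_def by (rule borel_measurable_cond_exp)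
  have Zm: "\<And>k (B :: (real \<times> real) set). Z k B \<in> borel_measurable M" unfolding Z_def by (rule borel_measurable_cond_exp2)
  have Zi: "\<And>k (B :: (real \<times> real) set). k \<in> Gen m \<Longrightarrow> B \<in> sets borel \<Longrightarrow> integrable M (Z k B)"
    unfolding Z_def using indi by (rule S.real_cond_exp_int(1))
  have Z01: "\<And>k (B :: (real \<times> real) set). k \<in> Gen m \<Longrightarrow> B \<in> sets borel \<Longrightarrow> AE \<omega> in M. 0 \<le> Z k B \<omega> \<and> Z k B \<omega> \<le> 1"
  proof -
    fix k and B :: "(real \<times> real) set" assume kB: "k \<in> Gen m" "B \<in> sets borel"
    have a: "AE \<omega> in M. 0 \<le> Z k B \<omega>" unfolding Z_def
      by (rule S.real_cond_exp_pos) (auto simp: indm[OF kB])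
    have b: "AE \<omega> in M. Z k B \<omega> \<le> real_cond_exp M ?F (\<lambda>_. 1) \<omega>" unfolding Z_def
      by (rule S.real_cond_exp_mono) (auto simp: indi[OF kB] indicator_def)
    have c: "AE \<omega> in M. real_cond_exp M ?F (\<lambda>_. 1) \<omega> = 1"
      by (rule S.real_cond_exp_F_meas) auto
    show "AE \<omega> in M. 0 \<le> Z k B \<omega> \<and> Z k B \<omega> \<le> 1" using a b c by eventually_elim auto
  qed
  have stepA: "(\<integral>\<omega>. eps j \<omega> * indicator B2 (Y k2 \<omega>) \<partial>M) = 0" if B2: "B2 \<in> sets borel" for B2
  proof -
    have eq: "(\<integral>\<omega>. indicator B1 (Y k1 \<omega>) * indicator B2 (Y k2 \<omega>) \<partial>M) = (\<integral>\<omega>. indicator B1 (Y k1 \<omega>) * Z k2 B2 \<omega> \<partial>M)"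
      if B1: "B1 \<in> sets borel" for B1
    proof -
      have HN: "AE \<omega> in M. real_cond_exp M ?F (indicator (A k1 B1 \<inter> A k2 B2)) \<omega> = Z k1 B1 \<omega> * Z k2 B2 \<omega>"
      proof -
        have pre: "{k1,k2} \<subseteq> Gen m" "finite {k1,k2}" "\<And>j. j \<in> {k1,k2} \<Longrightarrow> (if j = k1 then B1 else B2) \<in> sets borel"
          using k1 k2 B1 B2 by auto
        note H = HN2[of m, unfolded cond_indep_given_def, rule_format, of "{k1,k2}" "\<lambda>k. if k = k1 then B1 else B2", OF pre]
        have X0: "AE \<omega> in M. real_cond_exp M ?F (indicator (\<Inter>k\<in>{k1,k2}. Y k -` (if k = k1 then B1 else B2) \<inter> space M)) \<omega>
            = (\<Prod>k\<in>{k1,k2}. real_cond_exp M ?F (indicator (Y k -` (if k = k1 then B1 else B2) \<inter> space M)) \<omega>)"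
          unfolding Y_def[abs_def] by (rule H)
        have i: "(\<Inter>k\<in>{k1,k2}. Y k -` (if k = k1 then B1 else B2) \<inter> space M) = A k1 B1 \<inter> A k2 B2"
          using ne unfolding A_def by auto
        have p: "\<And>\<omega>. (\<Prod>k\<in>{k1,k2}. real_cond_exp M ?F (indicator (Y k -` (if k = k1 then B1 else B2) \<inter> space M)) \<omega>)
            = Z k1 B1 \<omega> * Z k2 B2 \<omega>"
          using ne unfolding Z_def A_def by simp
        show ?thesis using X0 unfolding i p .
      qed
      have "(\<integral>\<omega>. indicator B1 (Y k1 \<omega>) * indicator B2 (Y k2 \<omega>) \<partial>M) = (\<integral>\<omega>. (indicator (A k1 B1 \<inter> A k2 B2) \<omega> :: real) \<partial>M)"
        by (rule Bochner_Integration.integral_cong[OF refl]) (auto simp: A_def indicator_def)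
      also have "\<dots> = (\<integral>\<omega>. real_cond_exp M ?F (indicator (A k1 B1 \<inter> A k2 B2)) \<omega> \<partial>M)"
      proof (rule S.real_cond_exp_int(2)[symmetric])
        have "A k1 B1 \<inter> A k2 B2 \<in> sets M" using Am k1 k2 B1 B2 by auto
        then show "integrable M (indicator (A k1 B1 \<inter> A k2 B2) :: _ \<Rightarrow> real)"
          by (intro bdd_int[where B=1]) (auto simp: indicator_def)
      qed
      also have "\<dots> = (\<integral>\<omega>. Z k1 B1 \<omega> * Z k2 B2 \<omega> \<partial>M)"
        by (rule integral_cong_AE) (use HN Zm in auto)
      also have "\<dots> = (\<integral>\<omega>. Z k2 B2 \<omega> * indicator (A k1 B1) \<omega> \<partial>M)"
        unfolding Z_def[of k1]
      proof (subst mult.commute, rule S.real_cond_exp_intg(2))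
        show "integrable M (\<lambda>x. Z k2 B2 x * indicator (A k1 B1) x)"
        proof (rule Bochner_Integration.integrable_bound[OF Zi[OF k2 B2]])
          show "(\<lambda>x. Z k2 B2 x * indicator (A k1 B1) x) \<in> borel_measurable M"
            by (intro borel_measurable_times Zm indm[OF k1 B1])
        qed (auto simp: indicator_def)
      qed (auto simp: ZmF indm[OF k1 B1])
      also have "\<dots> = (\<integral>\<omega>. indicator B1 (Y k1 \<omega>) * Z k2 B2 \<omega> \<partial>M)"
        by (rule Bochner_Integration.integral_cong[OF refl]) (auto simp: A_def indicator_def)
      finally show ?thesis .
    qed
    have agree: "(\<integral>\<omega>. pr c1 (Y k1 \<omega>) * indicator B2 (Y k2 \<omega>) \<partial>M) = (\<integral>\<omega>. pr c1 (Y k1 \<omega>) * Z k2 B2 \<omega> \<partial>M)"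
    proof (rule integral_agree[OF Y1m])
      show "(\<lambda>\<omega>. indicator B2 (Y k2 \<omega>) :: real) \<in> borel_measurable M" using Y2m B2 by measurable
      show "integrable M (\<lambda>\<omega>. indicator B2 (Y k2 \<omega>) :: real)"
        by (rule bdd_int[where B=1]) (use Y2m B2 in \<open>auto simp: indicator_def\<close>)
      show "AE \<omega> in M. 0 \<le> Z k2 B2 \<omega>" using Z01[OF k2 B2] by eventually_elim auto
    qed (auto simp: Zm Zi[OF k2 B2] eq prm)
    have "(\<integral>\<omega>. eps j \<omega> * indicator B2 (Y k2 \<omega>) \<partial>M) = (\<integral>\<omega>. Z k2 B2 \<omega> * eps j \<omega> \<partial>M)"
      using agree unfolding epsj by (simp add: mult.commute)
    also have "\<dots> = (\<integral>\<omega>. Z k2 B2 \<omega> * real_cond_exp M ?F (eps j) \<omega> \<partial>M)"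
    proof (rule S.real_cond_exp_intg(2)[symmetric])
      show "integrable M (\<lambda>x. Z k2 B2 x * eps j x)"
      proof (rule Bochner_Integration.integrable_bound[OF eps_int[OF j2]])
        show "AE x in M. norm (Z k2 B2 x * eps j x) \<le> norm (eps j x)"
          using Z01[OF k2 B2] by eventually_elim (auto simp: abs_mult intro!: mult_left_le_one_le)
      qed (use Zm ejm in auto)
    qed (auto simp: ZmF ejm)
    also have "\<dots> = 0"
      by (rule integral_eq_zero_AE) (use ce1[OF jG] in auto)
    finally show ?thesis .
  qed
  define U where "U \<omega> = max (eps j \<omega>) 0" for \<omega>
  define V where "V \<omega> = max (- eps j \<omega>) 0" for \<omega>
  have Um: "U \<in> borel_measurable M" and Vm: "V \<in> borel_measurable M" unfolding U_def V_def using ejm by measurable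
  have UVb: "\<And>\<omega>. \<bar>U \<omega>\<bar> \<le> \<bar>eps j \<omega>\<bar>" "\<And>\<omega>. \<bar>V \<omega>\<bar> \<le> \<bar>eps j \<omega>\<bar>" unfolding U_def V_def by auto
  have UV: "\<And>\<omega>. eps j \<omega> = U \<omega> - V \<omega>" unfolding U_def V_def by auto
  have Ui: "integrable M U" by (rule Bochner_Integration.integrable_bound[OF eps_int[OF j2]]) (use Um UVb in auto)
  have Vi: "integrable M V" by (rule Bochner_Integration.integrable_bound[OF eps_int[OF j2]]) (use Vm UVb in auto)
  have iB: "\<And>(B :: (real \<times> real) set) (W :: 'a \<Rightarrow> real). B \<in> sets borel \<Longrightarrow> W \<in> borel_measurable M \<Longrightarrow> (\<And>\<omega>. \<bar>W \<omega>\<bar> \<le> \<bar>eps j \<omega>\<bar>) \<Longrightarrow>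
      integrable M (\<lambda>\<omega>. indicator B (Y k2 \<omega>) * W \<omega>)"
  proof -
    fix B :: "(real \<times> real) set" and W :: "'a \<Rightarrow> real" assume B: "B \<in> sets borel" and W: "W \<in> borel_measurable M" "\<And>\<omega>. \<bar>W \<omega>\<bar> \<le> \<bar>eps j \<omega>\<bar>"
    show "integrable M (\<lambda>\<omega>. indicator B (Y k2 \<omega>) * W \<omega>)"
    proof (rule Bochner_Integration.integrable_bound[OF eps_int[OF j2]])
      show "(\<lambda>\<omega>. indicator B (Y k2 \<omega>) * W \<omega>) \<in> borel_measurable M" using Y2m B W(1) by measurable
      show "AE x in M. norm (indicator B (Y k2 x) * W x) \<le> norm (eps j x)"
        using W(2) by (auto simp: indicator_def)
    qed
  qed
  have agree2: "(\<integral>\<omega>. pr c2 (Y k2 \<omega>) * U \<omega> \<partial>M) = (\<integral>\<omega>. pr c2 (Y k2 \<omega>) * V \<omega> \<partial>M)"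
  proof (rule integral_agree[OF Y2m Um Vm Ui Vi])
    show "AE x in M. 0 \<le> U x" "AE x in M. 0 \<le> V x" unfolding U_def V_def by auto
    fix B :: "(real \<times> real) set" assume B: "B \<in> sets borel"
    have "(\<integral>\<omega>. indicator B (Y k2 \<omega>) * U \<omega> \<partial>M) - (\<integral>\<omega>. indicator B (Y k2 \<omega>) * V \<omega> \<partial>M)
        = (\<integral>\<omega>. indicator B (Y k2 \<omega>) * U \<omega> - indicator B (Y k2 \<omega>) * V \<omega> \<partial>M)"
      by (rule Bochner_Integration.integral_diff[symmetric]) (use iB[OF B Um UVb(1)] iB[OF B Vm UVb(2)] in auto)
    also have "\<dots> = (\<integral>\<omega>. eps j \<omega> * indicator B (Y k2 \<omega>) \<partial>M)"
      by (rule Bochner_Integration.integral_cong[OF refl]) (auto simp: UV algebra_simps)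
    also have "\<dots> = 0" by (rule stepA[OF B])
    finally show "(\<integral>\<omega>. indicator B (Y k2 \<omega>) * U \<omega> \<partial>M) = (\<integral>\<omega>. indicator B (Y k2 \<omega>) * V \<omega> \<partial>M)" by simp
  qed (rule prm)
  have iP: "\<And>W :: 'a \<Rightarrow> real. W \<in> borel_measurable M \<Longrightarrow> (\<And>\<omega>. \<bar>W \<omega>\<bar> \<le> \<bar>eps j \<omega>\<bar>) \<Longrightarrow> integrable M (\<lambda>\<omega>. eps l \<omega> * W \<omega>)"
  proof -
    fix W :: "'a \<Rightarrow> real" assume W: "W \<in> borel_measurable M" "\<And>\<omega>. \<bar>W \<omega>\<bar> \<le> \<bar>eps j \<omega>\<bar>"
    show "integrable M (\<lambda>\<omega>. eps l \<omega> * W \<omega>)"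
    proof (rule Bochner_Integration.integrable_bound[OF prod_int[OF j2 l2]])
      show "(\<lambda>\<omega>. eps l \<omega> * W \<omega>) \<in> borel_measurable M" using elm W(1) by measurable
      show "AE x in M. norm (eps l x * W x) \<le> norm (eps j x * eps l x)"
      proof (intro AE_I2)
        fix x
        have "\<bar>eps l x\<bar> * \<bar>W x\<bar> \<le> \<bar>eps l x\<bar> * \<bar>eps j x\<bar>" using W(2)[of x] by (intro mult_left_mono) auto
        then show "norm (eps l x * W x) \<le> norm (eps j x * eps l x)" by (simp add: abs_mult mult.commute)
      qed
    qed
  qed
  have "(\<integral>\<omega>. eps j \<omega> * eps l \<omega> \<partial>M) = (\<integral>\<omega>. eps l \<omega> * U \<omega> - eps l \<omega> * V \<omega> \<partial>M)"
    by (rule Bochner_Integration.integral_cong[OF refl]) (auto simp: UV algebra_simps)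
  also have "\<dots> = (\<integral>\<omega>. eps l \<omega> * U \<omega> \<partial>M) - (\<integral>\<omega>. eps l \<omega> * V \<omega> \<partial>M)"
    by (rule Bochner_Integration.integral_diff) (use iP[OF Um UVb(1)] iP[OF Vm UVb(2)] in auto)
  also have "\<dots> = 0" using agree2 unfolding epsl by simp
  finally show ?thesis unfolding j_def l_def .
qed

end



context noise
begin

lemma orth_lt:
  assumes j: "j \<ge> 2" and jl: "j < l" and par: "j div 2 \<noteq> l div 2"
  shows "(\<integral>\<omega>. eps j \<omega> * eps l \<omega> \<partial>M) = 0"
proof -
  have l: "l \<ge> 2" using j jl by simp
  obtain m where lG: "l \<in> Gen (Suc m)" using gen_exists2[OF l] by blast
  show ?thesis
  proof (cases "j < 2^(m+1)")
    case True then show ?thesis using orth_cross[OF j True lG] by simp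
  next
    case False
    then have jG: "j \<in> Gen (Suc m)" using jl lG unfolding Gen_def by auto
    have k1: "j div 2 \<in> Gen m" using jG unfolding Gen_def by auto
    have k2: "l div 2 \<in> Gen m" using lG unfolding Gen_def by auto
    have "(\<integral>\<omega>. eps (2 * (j div 2) + j mod 2) \<omega> * eps (2 * (l div 2) + l mod 2) \<omega> \<partial>M) = 0"
      by (rule orth_same[OF k1 k2 par]) auto
    then show ?thesis by simp
  qed
qed

lemma orth:
  assumes j: "j \<ge> 2" and l: "l \<ge> 2" and par: "j div 2 \<noteq> l div 2"
  shows "(\<integral>\<omega>. eps j \<omega> * eps l \<omega> \<partial>M) = 0"
proof (cases "j < l")
  case True then show ?thesis using orth_lt[OF j True par] by simp
next
  case False
  then have "l < j" using par by (cases "l = j") auto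
  then have "(\<integral>\<omega>. eps l \<omega> * eps j \<omega> \<partial>M) = 0" using orth_lt[OF l _ ] par by auto
  then show ?thesis by (simp add: mult.commute)
qed

lemma eps_sq:
  assumes j: "j \<ge> 2" shows "(\<integral>\<omega>. eps j \<omega> * eps j \<omega> \<partial>M) = sigma2"
proof -
  obtain m where jG: "j \<in> Gen (Suc m)" using gen_exists2[OF j] by blast
  interpret S: sigma_finite_subalgebra M "gen_sigma M X (Tn m)" by (rule sfs)
  have "(\<integral>\<omega>. eps j \<omega> * eps j \<omega> \<partial>M) = (\<integral>\<omega>. eps j \<omega> ^ 2 \<partial>M)" by (simp add: power2_eq_square)
  also have "\<dots> = (\<integral>\<omega>. real_cond_exp M (gen_sigma M X (Tn m)) (\<lambda>\<omega>. eps j \<omega> ^ 2) \<omega> \<partial>M)"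
    by (rule S.real_cond_exp_int(2)[symmetric]) (rule eps2_int[OF j])
  also have "\<dots> = (\<integral>\<omega>. sigma2 \<partial>M)"
    by (rule integral_cong_AE) (use ce2[OF jG] in auto)
  also have "\<dots> = sigma2" by (simp add: prob_space)
  finally show ?thesis .
qed

end



theorem lemma5p4:
  fixes M :: "'a measure"
    and X eps delta :: "nat \<Rightarrow> 'a \<Rightarrow> real"
    and zeta :: "nat \<Rightarrow> 'a \<Rightarrow> bool \<times> bool"
    and p :: "nat \<Rightarrow> (bool \<times> bool) pmf"
    and a b c d sigma2 tau4 kappa8 rho' nu2 lambda4 :: real
    and i :: nat
  assumes prob: "prob_space M"
    \<comment> \<open>BAR process\<close>
    and X1_meas: "X 1 \<in> borel_measurable M"
    and X1_L8: "integrable M (\<lambda>\<omega>. X 1 \<omega> ^ 8)"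
    and eps_meas: "\<And>k. k \<ge> 2 \<Longrightarrow> eps k \<in> borel_measurable M"
    and X_even: "\<And>k \<omega>. k \<ge> 1 \<Longrightarrow> X (2*k) \<omega> = a + b * X k \<omega> + eps (2*k) \<omega>"
    and X_odd: "\<And>k \<omega>. k \<ge> 1 \<Longrightarrow> X (2*k+1) \<omega> = c + d * X k \<omega> + eps (2*k+1) \<omega>"
    and bd_pos: "0 < max \<bar>b\<bar> \<bar>d\<bar>" and bd_lt1: "max \<bar>b\<bar> \<bar>d\<bar> < 1"
    \<comment> \<open>(HN.1)\<close>
    and sigma2_pos: "sigma2 > 0" and tau4_pos: "tau4 > 0" and kappa8_pos: "kappa8 > 0"
    and rho'_bnd: "\<bar>rho'\<bar> < 1"
    and nu2_bnd: "0 \<le> nu2" "nu2 < 1"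
    and lambda4_bnd: "0 \<le> lambda4" "lambda4 < 1"
    and eps_L8: "\<And>n k. k \<in> Gen (Suc n) \<Longrightarrow> integrable M (\<lambda>\<omega>. eps k \<omega> ^ 8)"
    and ce1: "\<And>n k. k \<in> Gen (Suc n) \<Longrightarrow>
       AE \<omega> in M. real_cond_exp M (gen_sigma M X (Tn n)) (eps k) \<omega> = 0"
    and ce2: "\<And>n k. k \<in> Gen (Suc n) \<Longrightarrow>
       AE \<omega> in M. real_cond_exp M (gen_sigma M X (Tn n)) (\<lambda>\<omega>. eps k \<omega> ^ 2) \<omega> = sigma2"
    and ce4: "\<And>n k. k \<in> Gen (Suc n) \<Longrightarrow>
       AE \<omega> in M. real_cond_exp M (gen_sigma M X (Tn n)) (\<lambda>\<omega>. eps k \<omega> ^ 4) \<omega> = tau4"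
    and ce8: "\<And>n k. k \<in> Gen (Suc n) \<Longrightarrow>
       AE \<omega> in M. real_cond_exp M (gen_sigma M X (Tn n)) (\<lambda>\<omega>. eps k \<omega> ^ 8) \<omega> = kappa8"
    and ce_rho: "\<And>n k. k \<in> Gen n \<Longrightarrow>
       AE \<omega> in M. real_cond_exp M (gen_sigma M X (Tn n))
         (\<lambda>\<omega>. eps (2*k) \<omega> * eps (2*k+1) \<omega>) \<omega> = rho' * sigma2"
    and ce_nu: "\<And>n k. k \<in> Gen n \<Longrightarrow>
       AE \<omega> in M. real_cond_exp M (gen_sigma M X (Tn n))
         (\<lambda>\<omega>. eps (2*k) \<omega> ^ 2 * eps (2*k+1) \<omega> ^ 2) \<omega> = nu2 * tau4"
    and ce_lambda: "\<And>n k. k \<in> Gen n \<Longrightarrow>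
       AE \<omega> in M. real_cond_exp M (gen_sigma M X (Tn n))
         (\<lambda>\<omega>. eps (2*k) \<omega> ^ 4 * eps (2*k+1) \<omega> ^ 4) \<omega> = lambda4 * kappa8"
    \<comment> \<open>(HN.2)\<close>
    and HN2: "\<And>n. cond_indep_given M (gen_sigma M X (Tn n)) (Gen n)
       (\<lambda>k \<omega>. (eps (2*k) \<omega>, eps (2*k+1) \<omega>)) (borel :: (real \<times> real) measure)"
    \<comment> \<open>observation process\<close>
    and delta1: "\<And>\<omega>. delta 1 \<omega> = 1"
    and delta_even: "\<And>k \<omega>. k \<ge> 1 \<Longrightarrow> delta (2*k) \<omega> = delta k \<omega> * of_bool (fst (zeta k \<omega>))"
    and delta_odd: "\<And>k \<omega>. k \<ge> 1 \<Longrightarrow> delta (2*k+1) \<omega> = delta k \<omega> * of_bool (snd (zeta k \<omega>))"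
    and zeta_meas: "\<And>k. k \<ge> 1 \<Longrightarrow> zeta k \<in> measurable M (count_space UNIV)"
    and zeta_law: "\<And>k. k \<ge> 1 \<Longrightarrow> distr M (count_space UNIV) (zeta k) = measure_pmf (p (k mod 2))"
    and zeta_indep: "prob_space.indep_vars M (\<lambda>_. count_space UNIV) zeta {1..}"
    \<comment> \<open>(HO)\<close>
    and HO_pos: "\<And>i j. i \<le> 1 \<Longrightarrow> j \<le> 1 \<Longrightarrow> pmat p i j > 0"
    and HO_pi: "perron2 (pmat p) > 1"
    \<comment> \<open>(HI)\<close>
    and HI: "prob_space.indep_set M
       (sets (vimage_algebra (space M) (\<lambda>\<omega> k. (delta k \<omega>, zeta k \<omega>))
          (Pi\<^sub>M UNIV (\<lambda>_. (borel :: real measure) \<Otimes>\<^sub>M count_space (UNIV :: (bool \<times> bool) set)))))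
       (sets (vimage_algebra (space M) (\<lambda>\<omega> k. (X k \<omega>, eps k \<omega>))
          (Pi\<^sub>M UNIV (\<lambda>_. (borel :: real measure) \<Otimes>\<^sub>M (borel :: real measure)))))"
    and i_bnd: "i \<le> 1"
  shows "AE \<omega> in M. (\<lambda>n. (\<Sum>k\<in>Tn (n - 1). delta (2*k+i) \<omega> * eps (2*k+i) \<omega>)
                          / perron2 (pmat p) ^ n) \<longlonglongrightarrow> 0"
proof -
  interpret prob_space M by (rule prob)
  interpret N: noise M X eps a b c d sigma2
    by unfold_locales (use X1_meas eps_meas X_even X_odd eps_L8 ce1 ce2 HN2 in auto)
  interpret O: obs M delta zeta p
    by unfold_locales (use delta1 delta_even delta_odd zeta_meas zeta_law zeta_indep in auto)
  let ?pi = "perron2 (pmat p)"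
  define e where "e k = (\<integral>\<omega>. delta k \<omega> \<partial>M)" for k
  obtain C where C: "\<And>n. (\<Sum>k\<in>Tn n. e k) \<le> C * ?pi ^ n"
    using O.e_bound[OF HO_pos HO_pi] unfolding e_def by blast
  define Phi where "Phi \<omega> = (\<lambda>k. (delta k \<omega>, zeta k \<omega>))" for \<omega>
  define Psi where "Psi \<omega> = (\<lambda>k. (X k \<omega>, eps k \<omega>))" for \<omega>
  define N1 where "N1 = (Pi\<^sub>M (UNIV :: nat set) (\<lambda>_. (borel :: real measure) \<Otimes>\<^sub>M count_space (UNIV :: (bool \<times> bool) set)))"
  define N2 where "N2 = (Pi\<^sub>M (UNIV :: nat set) (\<lambda>_. (borel :: real measure) \<Otimes>\<^sub>M (borel :: real measure)))"
  have ind: "indep_set (sets (vimage_algebra (space M) Phi N1)) (sets (vimage_algebra (space M) Psi N2))"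
    using HI unfolding Phi_def Psi_def N1_def N2_def .
  have trm: "(\<integral>\<omega>. (delta j \<omega> * delta l \<omega>) * (eps j \<omega> * eps l \<omega>) \<partial>M)
        = (\<integral>\<omega>. delta j \<omega> * delta l \<omega> \<partial>M) * (\<integral>\<omega>. eps j \<omega> * eps l \<omega> \<partial>M)"
     "integrable M (\<lambda>\<omega>. (delta j \<omega> * delta l \<omega>) * (eps j \<omega> * eps l \<omega>))"
    if j: "j \<ge> 2" and l: "l \<ge> 2" for j l
  proof -
    have m1: "(\<lambda>\<omega>. delta j \<omega> * delta l \<omega>) \<in> borel_measurable (vimage_algebra (space M) Phi N1)"
    proof -
      have "(\<lambda>\<omega>. (\<lambda>x. fst (x j) * fst (x l)) (Phi \<omega>)) \<in> borel_measurable (vimage_algebra (space M) Phi N1)"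
        by (rule meas_vimage_comp) (auto simp: N1_def space_PiM space_pair_measure)
      then show ?thesis unfolding Phi_def by simp
    qed
    have m2: "(\<lambda>\<omega>. eps j \<omega> * eps l \<omega>) \<in> borel_measurable (vimage_algebra (space M) Psi N2)"
    proof -
      have "(\<lambda>\<omega>. (\<lambda>x. snd (x j) * snd (x l)) (Psi \<omega>)) \<in> borel_measurable (vimage_algebra (space M) Psi N2)"
        by (rule meas_vimage_comp) (auto simp: N2_def space_PiM space_pair_measure)
      then show ?thesis unfolding Psi_def by simp
    qed
    have dd: "integrable M (\<lambda>\<omega>. delta j \<omega> * delta l \<omega>)"
    proof (rule N.bdd_int[where B=1])
      show "(\<lambda>\<omega>. delta j \<omega> * delta l \<omega>) \<in> borel_measurable M"
        using O.delta_meas[of j] O.delta_meas[of l] j l by simp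
      fix \<omega> show "\<bar>delta j \<omega> * delta l \<omega>\<bar> \<le> 1"
        using O.delta01[of j \<omega>] O.delta01[of l \<omega>] j l by auto
    qed
    have ee: "integrable M (\<lambda>\<omega>. eps j \<omega> * eps l \<omega>)" by (rule N.prod_int[OF j l])
    show "(\<integral>\<omega>. (delta j \<omega> * delta l \<omega>) * (eps j \<omega> * eps l \<omega>) \<partial>M)
        = (\<integral>\<omega>. delta j \<omega> * delta l \<omega> \<partial>M) * (\<integral>\<omega>. eps j \<omega> * eps l \<omega> \<partial>M)"
      by (rule indep_vimage_integral(1)[OF ind m1 m2 dd ee])
    show "integrable M (\<lambda>\<omega>. (delta j \<omega> * delta l \<omega>) * (eps j \<omega> * eps l \<omega>))"
      by (rule indep_vimage_integral(2)[OF ind m1 m2 dd ee])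
  qed

  have finT: "\<And>n. finite (Tn n)" unfolding Tn_def by simp
  have kpos: "\<And>k n. k \<in> Tn n \<Longrightarrow> 2*k+i \<ge> 2" unfolding Tn_def by auto
  have epos: "\<And>k. k \<ge> 1 \<Longrightarrow> 0 \<le> e k" unfolding e_def by (rule O.e_nonneg)
  have C0: "0 \<le> C"
  proof -
    have "0 \<le> (\<Sum>k\<in>Tn 0. e k)" by (rule sum_nonneg) (use epos N.Tn_pos in auto)
    also have "\<dots> \<le> C" using C[of 0] by simp
    finally show ?thesis .
  qed
  have pi1: "?pi > 1" by (rule HO_pi)
  define S where "S n \<omega> = (\<Sum>k\<in>Tn (n - 1). delta (2*k+i) \<omega> * eps (2*k+i) \<omega>)" for n \<omega>
  define T where "T k1 k2 \<omega> = (delta (2*k1+i) \<omega> * delta (2*k2+i) \<omega>) * (eps (2*k1+i) \<omega> * eps (2*k2+i) \<omega>)" for k1 k2 \<omega>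
  have Ssq: "S n \<omega> ^ 2 = (\<Sum>k1\<in>Tn (n - 1). \<Sum>k2\<in>Tn (n - 1). T k1 k2 \<omega>)" for n \<omega>
  proof -
    have "S n \<omega> ^ 2 = S n \<omega> * S n \<omega>" by (simp add: power2_eq_square)
    also have "\<dots> = (\<Sum>k1\<in>Tn (n - 1). \<Sum>k2\<in>Tn (n - 1). (delta (2*k1+i) \<omega> * eps (2*k1+i) \<omega>) * (delta (2*k2+i) \<omega> * eps (2*k2+i) \<omega>))"
      unfolding S_def by (rule sum_product)
    also have "\<dots> = (\<Sum>k1\<in>Tn (n - 1). \<Sum>k2\<in>Tn (n - 1). T k1 k2 \<omega>)"
      unfolding T_def by (simp add: ac_simps)
    finally show ?thesis .
  qed
  have Tint: "\<And>k1 k2 n. k1 \<in> Tn n \<Longrightarrow> k2 \<in> Tn n \<Longrightarrow> integrable M (T k1 k2)"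
    unfolding T_def using trm(2) kpos by blast
  have Tval: "(\<integral>\<omega>. T k1 k2 \<omega> \<partial>M) = (if k1 = k2 then sigma2 * e (2*k1+i) else 0)"
    if k1: "k1 \<in> Tn n" and k2: "k2 \<in> Tn n" for k1 k2 n
  proof -
    have j: "2*k1+i \<ge> 2" and l: "2*k2+i \<ge> 2" using kpos k1 k2 by auto
    have "(\<integral>\<omega>. T k1 k2 \<omega> \<partial>M) = (\<integral>\<omega>. delta (2*k1+i) \<omega> * delta (2*k2+i) \<omega> \<partial>M) * (\<integral>\<omega>. eps (2*k1+i) \<omega> * eps (2*k2+i) \<omega> \<partial>M)"
      unfolding T_def by (rule trm(1)[OF j l])
    also have "\<dots> = (if k1 = k2 then sigma2 * e (2*k1+i) else 0)"
    proof (cases "k1 = k2")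
      case True
      have dd: "\<And>\<omega>. delta (2*k1+i) \<omega> * delta (2*k1+i) \<omega> = delta (2*k1+i) \<omega>"
        using O.delta01[of "2*k1+i"] j by fastforce
      show ?thesis using N.eps_sq[OF j] by (simp add: True[symmetric] dd e_def)
    next
      case False
      have "(2*k1+i) div 2 \<noteq> (2*k2+i) div 2" using False i_bnd by simp
      then show ?thesis using False N.orth[OF j l] by simp
    qed
    finally show ?thesis .
  qed
  have Sm: "\<And>n. S n \<in> borel_measurable M"
  proof -
    fix n
    have "\<And>k. k \<in> Tn (n - 1) \<Longrightarrow> (\<lambda>\<omega>. delta (2*k+i) \<omega> * eps (2*k+i) \<omega>) \<in> borel_measurable M"
    proof -
      fix k assume "k \<in> Tn (n - 1)"
      then have "2*k+i \<ge> 2" by (rule kpos)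
      then have "delta (2*k+i) \<in> borel_measurable M" "eps (2*k+i) \<in> borel_measurable M"
        using O.delta_meas[of "2*k+i"] N.eps_meas[of "2*k+i"] by auto
      then show "(\<lambda>\<omega>. delta (2*k+i) \<omega> * eps (2*k+i) \<omega>) \<in> borel_measurable M" by measurable
    qed
    then show "S n \<in> borel_measurable M" unfolding S_def[abs_def] by (rule borel_measurable_sum)
  qed
  have Sint: "integrable M (\<lambda>\<omega>. S n \<omega> ^ 2)" for n
    unfolding Ssq by (auto intro!: Bochner_Integration.integrable_sum Tint)
  have ES: "(\<integral>\<omega>. S n \<omega> ^ 2 \<partial>M) = sigma2 * (\<Sum>k\<in>Tn (n - 1). e (2*k+i))" for n
  proof -
    have "(\<integral>\<omega>. S n \<omega> ^ 2 \<partial>M) = (\<Sum>k1\<in>Tn (n - 1). \<Sum>k2\<in>Tn (n - 1). \<integral>\<omega>. T k1 k2 \<omega> \<partial>M)"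
    proof -
      have "(\<integral>\<omega>. (\<Sum>k1\<in>Tn (n - 1). \<Sum>k2\<in>Tn (n - 1). T k1 k2 \<omega>) \<partial>M)
          = (\<Sum>k1\<in>Tn (n - 1). \<integral>\<omega>. (\<Sum>k2\<in>Tn (n - 1). T k1 k2 \<omega>) \<partial>M)"
        by (rule Bochner_Integration.integral_sum) (auto intro!: Bochner_Integration.integrable_sum Tint)
      also have "\<dots> = (\<Sum>k1\<in>Tn (n - 1). \<Sum>k2\<in>Tn (n - 1). \<integral>\<omega>. T k1 k2 \<omega> \<partial>M)"
      proof (rule sum.cong[OF refl])
        fix k1 assume k1: "k1 \<in> Tn (n - 1)"
        show "(\<integral>\<omega>. (\<Sum>k2\<in>Tn (n - 1). T k1 k2 \<omega>) \<partial>M) = (\<Sum>k2\<in>Tn (n - 1). \<integral>\<omega>. T k1 k2 \<omega> \<partial>M)"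
          by (rule Bochner_Integration.integral_sum) (auto intro!: Tint k1)
      qed
      finally show ?thesis unfolding Ssq .
    qed
    also have "\<dots> = (\<Sum>k1\<in>Tn (n - 1). \<Sum>k2\<in>Tn (n - 1). (if k1 = k2 then sigma2 * e (2*k1+i) else 0))"
      by (intro sum.cong refl Tval) auto
    also have "\<dots> = (\<Sum>k1\<in>Tn (n - 1). sigma2 * e (2*k1+i))"
      by (rule sum.cong[OF refl]) (simp add: finT)
    also have "\<dots> = sigma2 * (\<Sum>k\<in>Tn (n - 1). e (2*k+i))" by (simp add: sum_distrib_left)
    finally show ?thesis .
  qed
  have Eb: "(\<Sum>k\<in>Tn (n - 1). e (2*k+i)) \<le> C * ?pi ^ Suc n" for n
  proof -
    have inj: "inj_on (\<lambda>k. 2*k+i) (Tn (n - 1))" by (auto simp: inj_on_def)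
    have "(\<Sum>k\<in>Tn (n - 1). e (2*k+i)) = (\<Sum>j\<in>(\<lambda>k. 2*k+i) ` Tn (n - 1). e j)"
      by (rule sum.reindex[OF inj, symmetric, unfolded comp_def])
    also have "\<dots> \<le> (\<Sum>j\<in>Tn (Suc n). e j)"
    proof (rule sum_mono2[OF finT])
      show "(\<lambda>k. 2*k+i) ` Tn (n - 1) \<subseteq> Tn (Suc n)"
      proof
        fix j assume "j \<in> (\<lambda>k. 2*k+i) ` Tn (n - 1)"
        then obtain k where k: "k \<in> Tn (n - 1)" "j = 2*k+i" by blast
        have k1: "k < 2^(n - 1 + 1)" using k(1) unfolding Tn_def by simp
        have pw: "(2::nat)^(n - 1 + 1) \<le> 2^(Suc n)" by (intro power_increasing) auto
        have "k < 2^(Suc n)" using less_le_trans[OF k1 pw] .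
        then have "2*k+i < 2 * 2^(Suc n)" using i_bnd by linarith
        then have "2*k+i < 2^(Suc n + 1)" by simp
        then show "j \<in> Tn (Suc n)" using k unfolding Tn_def by auto
      qed
      show "\<And>b. b \<in> Tn (Suc n) - (\<lambda>k. 2*k+i) ` Tn (n - 1) \<Longrightarrow> 0 \<le> e b"
        using epos N.Tn_pos by blast
    qed
    also have "\<dots> \<le> C * ?pi ^ Suc n" by (rule C)
    finally show ?thesis .
  qed
  define K where "K = sigma2 * C * ?pi"
  have K0: "0 \<le> K" unfolding K_def using sigma2_pos C0 pi1 by simp
  define Z where "Z n \<omega> = (S n \<omega> / ?pi ^ n) ^ 2" for n \<omega>
  have Zm: "\<And>n. Z n \<in> borel_measurable M" unfolding Z_def[abs_def] using Sm by measurable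
  have Zint: "\<And>n. integrable M (Z n)"
    unfolding Z_def power_divide using Sint by (intro integrable_divide) auto
  have EZ: "(\<integral>\<omega>. Z n \<omega> \<partial>M) \<le> K * (1 / ?pi) ^ n" for n
  proof -
    have "(\<integral>\<omega>. Z n \<omega> \<partial>M) = (\<integral>\<omega>. S n \<omega> ^ 2 \<partial>M) / (?pi ^ n) ^ 2"
      unfolding Z_def power_divide by simp
    also have "\<dots> = sigma2 * (\<Sum>k\<in>Tn (n - 1). e (2*k+i)) / (?pi ^ n) ^ 2" by (simp add: ES)
    also have "\<dots> \<le> sigma2 * (C * ?pi ^ Suc n) / (?pi ^ n) ^ 2"
      using Eb[of n] sigma2_pos by (intro divide_right_mono mult_left_mono) auto
    also have "\<dots> = K * (1 / ?pi) ^ n"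
      unfolding K_def using pi1 by (simp add: field_simps power2_eq_square power_mult_distrib)
    finally show ?thesis .
  qed
  have Z0: "\<And>n \<omega>. 0 \<le> Z n \<omega>" unfolding Z_def by simp
  have sg: "summable (\<lambda>n. K * (1 / ?pi) ^ n)"
    using pi1 by (intro summable_mult summable_geometric) auto
  have "(\<integral>\<^sup>+\<omega>. (\<Sum>n. ennreal (Z n \<omega>)) \<partial>M) = (\<Sum>n. \<integral>\<^sup>+\<omega>. ennreal (Z n \<omega>) \<partial>M)"
    by (rule nn_integral_suminf) (use Zm in measurable)
  also have "\<dots> = (\<Sum>n. ennreal (\<integral>\<omega>. Z n \<omega> \<partial>M))"
    by (intro suminf_cong nn_integral_eq_integral Zint) (auto simp: Z0)
  also have "\<dots> \<le> (\<Sum>n. ennreal (K * (1 / ?pi) ^ n))"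
    by (intro suminf_le ennreal_leI EZ) auto
  also have "\<dots> = ennreal (\<Sum>n. K * (1 / ?pi) ^ n)"
    by (rule suminf_ennreal2) (use K0 pi1 sg in auto)
  finally have le: "(\<integral>\<^sup>+\<omega>. (\<Sum>n. ennreal (Z n \<omega>)) \<partial>M) \<le> ennreal (\<Sum>n. K * (1 / ?pi) ^ n)" .
  have fin: "(\<integral>\<^sup>+\<omega>. (\<Sum>n. ennreal (Z n \<omega>)) \<partial>M) \<noteq> \<infinity>"
    using neq_top_trans[OF ennreal_neq_top le] by simp
  have "AE \<omega> in M. (\<Sum>n. ennreal (Z n \<omega>)) \<noteq> \<infinity>"
    by (rule nn_integral_PInf_AE[OF _ fin]) (use Zm in measurable)
  then show ?thesis
  proof (rule AE_mp, intro AE_I2 impI)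
    fix \<omega> assume "(\<Sum>n. ennreal (Z n \<omega>)) \<noteq> \<infinity>"
    then have "summable (\<lambda>n. Z n \<omega>)" by (intro summable_suminf_not_top Z0) auto
    then have "(\<lambda>n. Z n \<omega>) \<longlonglongrightarrow> 0" by (rule summable_LIMSEQ_zero)
    then have "(\<lambda>n. sqrt (Z n \<omega>)) \<longlonglongrightarrow> sqrt 0" by (rule tendsto_real_sqrt)
    then have "(\<lambda>n. \<bar>S n \<omega> / ?pi ^ n\<bar>) \<longlonglongrightarrow> 0" unfolding Z_def by simp
    then have "(\<lambda>n. S n \<omega> / ?pi ^ n) \<longlonglongrightarrow> 0" by (rule tendsto_rabs_zero_cancel)
    then show "(\<lambda>n. (\<Sum>k\<in>Tn (n - 1). delta (2*k+i) \<omega> * eps (2*k+i) \<omega>) / ?pi ^ n) \<longlonglongrightarrow> 0"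
      unfolding S_def .
  qed
qed



end
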